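(* Let $X$ be a finite $T_0$-space with more than one point. If $x\in X$ is a maximum or a minimum of $X$, then $p_X(\lambda)=-\lambda\, p_{X\setminus\{x\}}(\lambda)$, where $p_Y(\lambda)=\det(Y_M-\lambda I)$.
   Context: A finite $T_0$-space is identified with a finite poset via $x\le y$ iff $U_x\subseteq U_y$, where $U_x$ is the minimal open set containing $x$; subsets carry the induced order. For a labelling $Y=\{y_1,\dots,y_m\}$, $Y_M=(y_{i,j})$ is the $m\times m$ matrix with $y_{i,j}=0$ if $y_i\le y_j$ and $y_{i,j}=1$ otherwise. *)

theory Defs
  imports "Jordan_Normal_Form.Determinant"
begin

text \<open>A finite T0-space is identified with a finite poset; we model the space X as a
finite subset of a type with a partial order (the specialization order), subsets
carrying the induced order.  A labelling of Y is a duplicate-free list ys with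
set ys = Y.\<close>

definition poset_matrix :: "'a::order list \<Rightarrow> real mat" where
  "poset_matrix ys = mat (length ys) (length ys)
     (\<lambda>(i,j). if ys ! i \<le> ys ! j then 0 else 1)"

definition poset_charpoly :: "'a::order list \<Rightarrow> real \<Rightarrow> real" where
  "poset_charpoly ys t = det (poset_matrix ys - t \<cdot>\<^sub>m 1\<^sub>m (length ys))"

end

theory Submission
  imports Defs
begin

lemma det_permute_both:
  assumes B: "(B :: real mat) \<in> carrier_mat n n" and p: "p permutes {0..<n}"
  shows "det (mat n n (\<lambda>(i,j). B $$ (p i, p j))) = det B"
proof -
  define C where "C = mat n n (\<lambda>(i,j). B $$ (i, p j))"
  have C: "C \<in> carrier_mat n n" unfolding C_def by simp
  have pn: "\<And>i. i < n \<Longrightarrow> p i < n" using p by (simp add: permutes_in_image)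
  have "mat n n (\<lambda>(i,j). B $$ (p i, p j)) = mat n n (\<lambda>(i,j). C $$ (p i, j))"
    by (rule eq_matI, auto simp: C_def pn)
  hence 1: "det (mat n n (\<lambda>(i,j). B $$ (p i, p j))) = signof p * det C"
    using det_permute_rows[OF C p] by simp
  have "C = transpose_mat (mat n n (\<lambda>(i,j). (transpose_mat B) $$ (p i, j)))"
    by (rule eq_matI, insert B, auto simp: C_def pn)
  hence "det C = det (mat n n (\<lambda>(i,j). (transpose_mat B) $$ (p i, j)))"
    by (simp add: det_transpose[of _ n])
  also have "\<dots> = signof p * det (transpose_mat B)"
    by (rule det_permute_rows[OF _ p], insert B, auto)
  also have "\<dots> = signof p * det B" using det_transpose[OF B] by simp
  finally have "det (mat n n (\<lambda>(i,j). B $$ (p i, p j))) = (signof p * signof p) * det B"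
    using 1 by simp
  moreover have "(signof p * signof p :: real) = 1"
  proof -
    have "(signof p :: real) \<in> {1, -1}" by (rule signof_pm_one)
    then consider "(signof p :: real) = 1" | "(signof p :: real) = -1" by blast
    then show ?thesis by cases (simp_all only: mult_1 mult_minus1 minus_minus)
  qed
  ultimately show ?thesis by simp
qed

lemma charpoly_perm:
  fixes xs zs :: "'a::order list"
  assumes "distinct xs" "distinct zs" "set xs = set zs"
  shows "poset_charpoly xs t = poset_charpoly zs t"
proof -
  define n where "n = length zs"
  have len: "length xs = n" unfolding n_def using assms distinct_card by metis
  define p where "p = (\<lambda>i. if i < n then (SOME k. k < n \<and> zs ! k = xs ! i) else i)"
  have ex: "\<And>i. i < n \<Longrightarrow> \<exists>k. k < n \<and> zs ! k = xs ! i"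
  proof -
    fix i assume "i < n"
    hence "xs ! i \<in> set zs" using assms(3) len by (metis nth_mem)
    thus "\<exists>k. k < n \<and> zs ! k = xs ! i" by (auto simp add: in_set_conv_nth n_def)
  qed
  have pn: "\<And>i. i < n \<Longrightarrow> p i < n" and pz: "\<And>i. i < n \<Longrightarrow> zs ! p i = xs ! i"
    unfolding p_def using someI_ex[OF ex] by auto
  have inj: "inj_on p {0..<n}"
  proof (rule inj_onI)
    fix i j assume "i \<in> {0..<n}" "j \<in> {0..<n}" "p i = p j"
    then have "xs ! i = xs ! j" using pz by (metis atLeastLessThan_iff)
    then show "i = j" using assms(1) len \<open>i \<in> _\<close> \<open>j \<in> _\<close> nth_eq_iff_index_eq by auto
  qed
  have lz: "length zs = n" by (simp add: n_def)
  have "p ` {0..<n} \<subseteq> {0..<n}" using pn by auto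
  hence "p ` {0..<n} = {0..<n}"
    by (intro endo_inj_surj inj) auto
  hence bij: "bij_betw p {0..<n} {0..<n}" using inj by (simp add: bij_betw_def)
  have p: "p permutes {0..<n}"
    by (rule bij_imp_permutes[OF bij], simp add: p_def)
  define B where "B = poset_matrix zs - t \<cdot>\<^sub>m 1\<^sub>m n"
  have B: "B \<in> carrier_mat n n" unfolding B_def by (intro minus_carrier_mat smult_carrier_mat one_carrier_mat)
  have Bij: "\<And>i j. i < n \<Longrightarrow> j < n \<Longrightarrow> B $$ (i,j) = (if zs ! i \<le> zs ! j then 0 else 1) - (if i = j then t else 0)"
    unfolding B_def poset_matrix_def lz by simp
  have "poset_matrix xs - t \<cdot>\<^sub>m 1\<^sub>m (length xs) = mat n n (\<lambda>(i,j). B $$ (p i, p j))"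
  proof (rule eq_matI)
    fix i j assume ij: "i < dim_row (mat n n (\<lambda>(i,j). B $$ (p i, p j)))"
      "j < dim_col (mat n n (\<lambda>(i,j). B $$ (p i, p j)))"
    hence i: "i < n" and j: "j < n" by auto
    have e: "(p i = p j) = (i = j)" using inj i j by (auto dest: inj_onD)
    have "mat n n (\<lambda>(i,j). B $$ (p i, p j)) $$ (i, j) = B $$ (p i, p j)" using i j by simp
    also have "\<dots> = (if xs ! i \<le> xs ! j then 0 else 1) - (if i = j then t else 0)"
      using Bij[OF pn[OF i] pn[OF j]] pz[OF i] pz[OF j] e by simp
    also have "\<dots> = (poset_matrix xs - t \<cdot>\<^sub>m 1\<^sub>m (length xs)) $$ (i, j)"
      using i j unfolding poset_matrix_def len by simp
    finally show "(poset_matrix xs - t \<cdot>\<^sub>m 1\<^sub>m (length xs)) $$ (i, j) = mat n n (\<lambda>(i,j). B $$ (p i, p j)) $$ (i, j)" by simp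
  qed (auto simp: poset_matrix_def len)
  thus ?thesis unfolding poset_charpoly_def using det_permute_both[OF B p]
    by (simp add: B_def n_def)
qed

theorem mainTheorem15:
  fixes X :: "'a::order set" and x :: 'a and xs ys :: "'a list" and t :: real
  assumes "finite X" and "card X > 1"
    and "x \<in> X"
    and "(\<forall>y\<in>X. y \<le> x) \<or> (\<forall>y\<in>X. x \<le> y)"
    and "distinct xs" and "set xs = X"
    and "distinct ys" and "set ys = X - {x}"
  shows "poset_charpoly xs t = - t * poset_charpoly ys t"
proof -
  define zs where "zs = x # ys"
  have "poset_charpoly xs t = poset_charpoly zs t"
    by (rule charpoly_perm, insert assms, auto simp: zs_def)
  define m where "m = length ys"
  define A where "A = poset_matrix zs - t \<cdot>\<^sub>m 1\<^sub>m (Suc m)"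
  have A: "A \<in> carrier_mat (Suc m) (Suc m)" unfolding A_def by (intro minus_carrier_mat smult_carrier_mat one_carrier_mat)
  have Aij: "\<And>i j. i < Suc m \<Longrightarrow> j < Suc m \<Longrightarrow> A $$ (i,j) =
     (if zs ! i \<le> zs ! j then 0 else 1) - (if i = j then t else 0)"
    unfolding A_def poset_matrix_def zs_def m_def by auto
  have xny: "\<And>k. k < m \<Longrightarrow> ys ! k \<noteq> x" using assms(8) m_def nth_mem by fastforce
  have yX: "\<And>k. k < m \<Longrightarrow> ys ! k \<in> X" using assms(8) m_def nth_mem by fastforce
  have del: "mat_delete A 0 0 = poset_matrix ys - t \<cdot>\<^sub>m 1\<^sub>m m"
    by (rule eq_matI, insert A, auto simp: mat_delete_def Aij poset_matrix_def m_def zs_def)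
  have cz: "poset_charpoly zs t = det A" unfolding poset_charpoly_def A_def zs_def m_def by simp
  have A00: "A $$ (0,0) = - t" using Aij[of 0 0] by simp
  have "det A = - t * det (mat_delete A 0 0)"
    using assms(4)
  proof
    assume mx: "\<forall>y\<in>X. y \<le> x"
    have "det A = (\<Sum>i<Suc m. A $$ (i,0) * cofactor A i 0)"
      by (rule laplace_expansion_column[OF A], simp)
    also have "\<dots> = A $$ (0,0) * cofactor A 0 0"
    proof -
      have z: "\<And>i. i \<in> {..<Suc m} - {0} \<Longrightarrow> A $$ (i,0) * cofactor A i 0 = 0"
      proof -
        fix i assume "i \<in> {..<Suc m} - {0}"
        then obtain k where k: "i = Suc k" "k < m" by (cases i) auto
        show "A $$ (i,0) * cofactor A i 0 = 0" using Aij[of i 0] k mx yX[of k] by (simp add: zs_def)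
      qed
      have "(\<Sum>i<Suc m. A $$ (i,0) * cofactor A i 0) = A $$ (0,0) * cofactor A 0 0 + (\<Sum>i\<in>{..<Suc m} - {0}. A $$ (i,0) * cofactor A i 0)"
        by (rule sum.remove) auto
      thus ?thesis using sum.neutral[of "{..<Suc m} - {0}", OF ballI[OF z]] by simp
    qed
    finally show ?thesis using A00 by (simp add: cofactor_def)
  next
    assume mn: "\<forall>y\<in>X. x \<le> y"
    have "det A = (\<Sum>j<Suc m. A $$ (0,j) * cofactor A 0 j)"
      by (rule laplace_expansion_row[OF A], simp)
    also have "\<dots> = A $$ (0,0) * cofactor A 0 0"
    proof -
      have z: "\<And>i. i \<in> {..<Suc m} - {0} \<Longrightarrow> A $$ (0,i) * cofactor A 0 i = 0"
      proof -
        fix i assume "i \<in> {..<Suc m} - {0}"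
        then obtain k where k: "i = Suc k" "k < m" by (cases i) auto
        show "A $$ (0,i) * cofactor A 0 i = 0" using Aij[of 0 i] k mn yX[of k] by (simp add: zs_def)
      qed
      have "(\<Sum>i<Suc m. A $$ (0,i) * cofactor A 0 i) = A $$ (0,0) * cofactor A 0 0 + (\<Sum>i\<in>{..<Suc m} - {0}. A $$ (0,i) * cofactor A 0 i)"
        by (rule sum.remove) auto
      thus ?thesis using sum.neutral[of "{..<Suc m} - {0}", OF ballI[OF z]] by simp
    qed
    finally show ?thesis using A00 by (simp add: cofactor_def)
  qed
  thus ?thesis using \<open>poset_charpoly xs t = poset_charpoly zs t\<close> cz del
    by (simp add: poset_charpoly_def m_def)
qed

end
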